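(* Let $m\ge 1$ be an integer and $y=(y_0,\dots,y_{2m})\in\mathbb{R}^{2m+1}_+$. Then the function $$\mathcal{I}(x)=\mathcal{I}(y\,\|\,x*x)=\sum_{i=0}^{2m}\Big(y_i\log\frac{y_i}{(x*x)_i}-y_i+(x*x)_i\Big)$$ attains its minimum over $x\in\mathbb{R}^{m+1}_+$; i.e. the problem of minimizing $\mathcal{I}(y\|x*x)$ over $x\in\mathbb{R}^{m+1}_+$ admits a solution.
   Context: For $x=(x_0,\dots,x_m)\in\mathbb{R}^{m+1}$ set $x_k=0$ for $k<0$ and $k>m$, and define the autoconvolution $(x*x)_i=\sum_{j=0}^{i}x_{i-j}x_j$ for $i=0,\dots,2m$. For nonnegative vectors $u,v$ of equal length, the I-divergence is $\mathcal{I}(u\|v)=\sum_i\big(u_i\log\frac{u_i}{v_i}-u_i+v_i\big)$ if $u_i=0$ whenever $v_i=0$ (with the convention $0\log 0=0$, $0\log(0/0)=0$), and $\mathcal{I}(u\|v)=\infty$ if some $u_i>0$ has $v_i=0$. *)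

theory Defs
  imports "HOL-Analysis.Analysis"
begin

text \<open>Autoconvolution of a vector x = (x_0,...,x_m), represented as a function
  nat => real that vanishes outside {0..m}: (x*x)_i = sum_{j=0}^{i} x_{i-j} x_j.\<close>
definition autoconv :: "(nat \<Rightarrow> real) \<Rightarrow> nat \<Rightarrow> real" where
  "autoconv x i = (\<Sum>j\<le>i. x (i - j) * x j)"

text \<open>I-divergence of nonnegative vectors u, v of length n (indices 0..n-1),
  with values in the extended reals; conventions 0 log 0 = 0, 0 log (0/0) = 0,
  and value infinity if some u_i > 0 has v_i = 0.\<close>
definition idiv :: "nat \<Rightarrow> (nat \<Rightarrow> real) \<Rightarrow> (nat \<Rightarrow> real) \<Rightarrow> ereal" where
  "idiv n u v =
     (if \<exists>i<n. u i > 0 \<and> v i = 0 then \<infinity>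
      else ereal (\<Sum>i<n. (if u i = 0 then 0 else u i * ln (u i / v i)) - u i + v i))"

end

theory Submission
  imports Defs
begin

definition phi :: "real \<Rightarrow> real \<Rightarrow> real" where
  "phi u v = (if u = 0 then 0 else u * ln (u / v)) - u + v"

lemma phi_nonneg:
  assumes "u \<ge> 0" "v \<ge> 0" "u > 0 \<Longrightarrow> v > 0"
  shows "phi u v \<ge> 0"
proof (cases "u = 0")
  case True then show ?thesis using assms by (simp add: phi_def)
next
  case False
  then have u: "u > 0" and v: "v > 0" using assms by auto
  have "ln (v / u) \<le> v / u - 1" using u v by (intro ln_le_minus_one) simp
  then have "u * ln (v / u) \<le> u * (v / u - 1)" using u by (intro mult_left_mono) auto
  also have "\<dots> = v - u" using u by (simp add: field_simps)
  finally have "u * ln (v / u) \<le> v - u" .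
  moreover have "ln (u / v) = - ln (v / u)" using u v by (simp add: ln_div)
  ultimately show ?thesis using False by (simp add: phi_def)
qed

lemma phi_half:
  assumes "u \<ge> 0" "v \<ge> 0" "u > 0 \<Longrightarrow> v > 0"
  shows "phi u v \<ge> v / 2 - u"
proof (cases "u = 0")
  case True then show ?thesis using assms by (simp add: phi_def)
next
  case False
  then have u: "u > 0" and v: "v > 0" using assms by auto
  have "ln (v / (2*u)) \<le> v / (2*u) - 1" using u v by (intro ln_le_minus_one) simp
  moreover have "ln (v / u) = ln 2 + ln (v / (2*u))" using u v by (simp add: ln_div ln_mult)
  moreover have "ln (2::real) \<le> 1" using ln_le_minus_one[of 2] by simp
  ultimately have "ln (v / u) \<le> v / (2*u)" by linarith
  then have "u * ln (v / u) \<le> u * (v / (2*u))" using u by (intro mult_left_mono) auto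
  also have "\<dots> = v / 2" using u by (simp add: field_simps)
  finally have "u * ln (v / u) \<le> v / 2" .
  moreover have "ln (u / v) = - ln (v / u)" using u v by (simp add: ln_div)
  ultimately show ?thesis using False by (simp add: phi_def)
qed

lemma phi_small:
  assumes u: "u > 0" and v: "v > 0" and le: "v \<le> u * exp (- ((D + u) / u))"
  shows "phi u v \<ge> D"
proof -
  have "ln v \<le> ln (u * exp (- ((D + u) / u)))" using le v u by simp
  also have "\<dots> = ln u - (D + u) / u" using u by (simp add: ln_mult)
  finally have "ln (u / v) \<ge> (D + u) / u" using u v by (simp add: ln_div)
  then have "u * ln (u / v) \<ge> u * ((D + u) / u)" using u by (intro mult_left_mono) auto
  then have "u * ln (u / v) \<ge> D + u" using u by simp
  then show ?thesis using u v by (simp add: phi_def)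
qed

lemma cont_coord [continuous_intros]: "continuous_on S (\<lambda>x::nat\<Rightarrow>real. x i)"
  by (rule continuous_on_subset[OF continuous_on_product_coordinates]) simp

lemma cont_autoconv [continuous_intros]: "continuous_on S (\<lambda>x. autoconv x i)"
  unfolding autoconv_def by (intro continuous_intros)

lemma autoconv_nonneg: "(\<forall>k. x k \<ge> 0) \<Longrightarrow> autoconv x i \<ge> 0"
  unfolding autoconv_def by (intro sum_nonneg) auto

lemma autoconv_diag: assumes "\<forall>k. x k \<ge> 0" shows "autoconv x (2*k) \<ge> x k * x k"
proof -
  have "x (2*k - k) * x k \<le> (\<Sum>j\<le>2*k. x (2*k - j) * x j)"
    by (rule member_le_sum) (use assms in auto)
  then show ?thesis by (simp add: autoconv_def)
qed

lemma idiv_eq: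
  assumes "\<And>i. i < n \<Longrightarrow> u i > 0 \<Longrightarrow> v i > 0"
  shows "idiv n u v = ereal (\<Sum>i<n. phi (u i) (v i))"
  using assms unfolding idiv_def phi_def by force

theorem proposition1:
  fixes m :: nat and y :: "nat \<Rightarrow> real"
  assumes "m \<ge> 1"
    and "\<And>i. i \<le> 2 * m \<Longrightarrow> y i \<ge> 0"
  shows "\<exists>x :: nat \<Rightarrow> real.
           (\<forall>k. x k \<ge> 0) \<and> (\<forall>k>m. x k = 0) \<and>
           (\<forall>x' :: nat \<Rightarrow> real. (\<forall>k. x' k \<ge> 0) \<and> (\<forall>k>m. x' k = 0) \<longrightarrow>
              idiv (2 * m + 1) y (autoconv x) \<le> idiv (2 * m + 1) y (autoconv x'))"
proof -
  define n where "n = 2 * m + 1"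
  have ynn: "\<And>i. i < n \<Longrightarrow> y i \<ge> 0" using assms(2) by (simp add: n_def)
  define g where "g x = (\<Sum>i<n. phi (y i) (autoconv x i))" for x
  define x0 :: "nat \<Rightarrow> real" where "x0 k = (if k \<le> m then 1 else 0)" for k
  have x0nn: "\<forall>k. x0 k \<ge> 0" by (simp add: x0_def)
  have x0ge: "autoconv x0 i \<ge> 1" if "i < n" for i
  proof -
    have "x0 (i - min i m) * x0 (min i m) \<le> (\<Sum>j\<le>i. x0 (i - j) * x0 j)"
      by (rule member_le_sum) (auto simp: x0_def)
    moreover have "x0 (i - min i m) * x0 (min i m) = 1" using that by (auto simp: x0_def n_def)
    ultimately show ?thesis by (simp add: autoconv_def)
  qed
  define C where "C = g x0"
  have C0: "C \<ge> 0" unfolding C_def g_def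
    by (intro sum_nonneg phi_nonneg) (use ynn autoconv_nonneg[OF x0nn] x0ge in force)+
  define Y where "Y = (\<Sum>i<n. y i)"
  have Y0: "Y \<ge> 0" unfolding Y_def by (intro sum_nonneg) (use ynn in auto)
  have yY: "y i \<le> Y" if "i < n" for i
    unfolding Y_def by (rule member_le_sum) (use ynn that in auto)
  define R where "R = C + Y + 2"
  define D where "D = (\<lambda>i. y i * exp (- ((C + 1 + y i) / y i))) ` {i. i < n \<and> y i > 0}"
  define \<delta> where "\<delta> = Min (insert 1 D)"
  have finD: "finite D" unfolding D_def by simp
  have \<delta>pos: "\<delta> > 0" unfolding \<delta>_def using finD by (auto simp: D_def)
  have \<delta>1: "\<delta> \<le> 1" unfolding \<delta>_def using finD by simp
  have \<delta>le: "\<delta> \<le> y i * exp (- ((C + 1 + y i) / y i))" if "i < n" "y i > 0" for i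
    unfolding \<delta>_def using finD that by (intro Min_le) (auto simp: D_def)
  define S where "S k = (if k \<le> m then {0..R} else {0::real})" for k
  define B where "B = PiE UNIV S"
  have cB: "compact B"
  proof -
    have "compactin (product_topology (\<lambda>i. euclidean) UNIV) (PiE UNIV S)"
      by (subst compactin_PiE) (auto simp: S_def)
    then show ?thesis unfolding B_def by (simp add: euclidean_product_topology)
  qed
  define K where "K = B \<inter> (\<Inter>i\<in>{i. i < n \<and> y i > 0}. {x. \<delta> \<le> autoconv x i})"
  have cK: "compact K" unfolding K_def
    by (intro compact_Int_closed cB closed_INT ballI closed_Collect_le continuous_intros)
  have inB: "x \<in> B \<longleftrightarrow> (\<forall>k. 0 \<le> x k \<and> x k \<le> (if k \<le> m then R else 0))" for x
    unfolding B_def S_def by (auto simp: PiE_def Pi_def extensional_def split: if_splits) (metis order_antisym)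
  have x0K: "x0 \<in> K"
  proof -
    have "R \<ge> 1" using C0 Y0 by (simp add: R_def)
    then have "x0 \<in> B" by (auto simp: inB x0_def)
    moreover have "\<delta> \<le> autoconv x0 i" if "i < n" for i using x0ge[OF that] \<delta>1 by linarith
    ultimately show ?thesis by (auto simp: K_def)
  qed
  have Kprops: "(\<forall>k. x k \<ge> 0) \<and> (\<forall>k>m. x k = 0) \<and> (\<forall>i<n. y i > 0 \<longrightarrow> autoconv x i > 0)"
    if "x \<in> K" for x
  proof -
    have "x \<in> B" using that by (simp add: K_def)
    then have h: "\<forall>k. 0 \<le> x k \<and> x k \<le> (if k \<le> m then R else 0)" by (simp add: inB)
    have "x k = 0" if "k > m" for k using h[rule_format, of k] that by auto
    then have "(\<forall>k. x k \<ge> 0) \<and> (\<forall>k>m. x k = 0)" using h by auto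
    moreover have "\<forall>i<n. y i > 0 \<longrightarrow> autoconv x i > 0"
      using that \<delta>pos unfolding K_def by force
    ultimately show ?thesis by blast
  qed
  have gcont: "continuous_on K g"
    unfolding g_def
  proof (intro continuous_on_sum)
    fix i assume "i \<in> {..<n}"
    show "continuous_on K (\<lambda>x. phi (y i) (autoconv x i))"
    proof (cases "y i > 0")
      case False
      then have "y i = 0" using ynn \<open>i \<in> {..<n}\<close> by force
      then show ?thesis by (simp add: phi_def continuous_intros)
    next
      case True
      have pos: "\<forall>x\<in>K. autoconv x i > 0" using Kprops True \<open>i \<in> {..<n}\<close> by auto
      show ?thesis unfolding phi_def using True pos
        by (auto intro!: continuous_intros)
    qed
  qed
  obtain xs where xsK: "xs \<in> K" and xsmin: "\<And>x. x \<in> K \<Longrightarrow> g xs \<le> g x"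
    using continuous_attains_inf[OF cK _ gcont] x0K by blast
  have idivK: "idiv n y (autoconv x) = ereal (g x)"
    if "\<And>i. i < n \<Longrightarrow> y i > 0 \<Longrightarrow> autoconv x i > 0" for x
    unfolding g_def by (rule idiv_eq) (use that in auto)
  have gxs: "g xs \<le> C" unfolding C_def using xsmin[OF x0K] .
  show ?thesis unfolding n_def[symmetric]
  proof (intro exI[of _ xs] conjI allI impI)
    show "xs k \<ge> 0" for k using Kprops[OF xsK] by auto
    show "xs k = 0" if "k > m" for k using Kprops[OF xsK] that by auto
    fix x' :: "nat \<Rightarrow> real" assume adm: "(\<forall>k. x' k \<ge> 0) \<and> (\<forall>k>m. x' k = 0)"
    have e1: "idiv n y (autoconv xs) = ereal (g xs)" using Kprops[OF xsK] by (intro idivK) auto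
    show "idiv n y (autoconv xs) \<le> idiv n y (autoconv x')"
    proof (cases "\<exists>i<n. y i > 0 \<and> autoconv x' i = 0")
      case True
      then show ?thesis by (simp add: idiv_def)
    next
      case False
      have vnn: "\<And>i. autoconv x' i \<ge> 0" using adm autoconv_nonneg by blast
      have vpos: "\<And>i. i < n \<Longrightarrow> y i > 0 \<Longrightarrow> autoconv x' i > 0"
        using False vnn by (metis less_eq_real_def)
      have e2: "idiv n y (autoconv x') = ereal (g x')" by (rule idivK) (use vpos in auto)
      have phinn: "\<And>i. i < n \<Longrightarrow> phi (y i) (autoconv x' i) \<ge> 0"
        using phi_nonneg ynn vnn vpos by blast
      have gge: "g x' \<ge> phi (y i) (autoconv x' i)" if "i < n" for i
        unfolding g_def by (rule member_le_sum) (use that phinn in auto)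
      show ?thesis
      proof (cases "x' \<in> K")
        case True
        then show ?thesis using e1 e2 xsmin by simp
      next
        case notK: False
        have "g x' > C"
        proof (cases "x' \<in> B")
          case False
          then obtain k where k: "k \<le> m" "x' k > R" using adm unfolding inB
            by (metis not_le order_refl)
          have kn: "2 * k < n" using k by (simp add: n_def)
          have "R \<ge> 2" using C0 Y0 by (simp add: R_def)
          then have "R * R / 2 \<ge> R" by (simp add: field_simps)
          have "x' k * x' k \<ge> R * R" using k \<open>R \<ge> 2\<close> by (intro mult_mono) auto
          then have "autoconv x' (2*k) \<ge> R * R" using autoconv_diag[of x' k] adm by fastforce
          moreover have "phi (y (2*k)) (autoconv x' (2*k)) \<ge> autoconv x' (2*k) / 2 - y (2*k)"
            using phi_half ynn[OF kn] vnn vpos[OF kn] by blast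
          moreover note gge[OF kn] yY[OF kn] \<open>R * R / 2 \<ge> R\<close>
          ultimately show ?thesis unfolding R_def by linarith
        next
          case True
          then obtain i where i: "i < n" "y i > 0" "autoconv x' i < \<delta>"
            using notK unfolding K_def by force
          have "phi (y i) (autoconv x' i) \<ge> C + 1"
            using phi_small[OF i(2) vpos[OF i(1,2)]] \<delta>le[OF i(1,2)] i(3) by force
          then show ?thesis using gge[OF i(1)] by linarith
        qed
        then show ?thesis using e1 e2 gxs by simp
      qed
    qed
  qed
qed

end
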